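(* Let $n\ge1$ and $0\le \bar s\le n$. Then $$\max\Big\{\prod_{i=1}^n(1+z_i^2)\ :\ z_1,\dots,z_n\in[0,1],\ \sum_{i=1}^n z_i=\bar s\Big\}=2^{\lfloor \bar s\rfloor}\big[1+(\bar s-\lfloor\bar s\rfloor)^2\big],$$ equivalently the maximum of $1+\sum_{k=1}^n\sum_{1\le i_1<\cdots<i_k\le n}z_{i_1}^2\cdots z_{i_k}^2$ over this set equals the same value.
   Context: $\lfloor x\rfloor$ denotes the greatest integer less than or equal to $x$. *)

theory Defs
  imports Complex_Main
begin

end

theory Submission
  imports Defs
begin

definition gg :: "real \<Rightarrow> real" where
  "gg s = 2 ^ nat \<lfloor>s\<rfloor> * (1 + (s - of_int \<lfloor>s\<rfloor>)^2)"

lemma poly_ineq: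
  fixes a b :: real
  assumes "0 \<le> a" "a \<le> 1" "0 \<le> b" "b \<le> 1"
  shows "(1 + b^2) * (1 + a^2) \<le> 2 * (1 + (a + b - 1)^2)"
proof -
  have "2 * (1 + (a + b - 1)^2) - (1 + b^2) * (1 + a^2) = (1-a)*(1-b)*(3 - a - b - a*b)"
    by (simp add: algebra_simps power2_eq_square)
  moreover have "(1-a)*(1-b)*(3 - a - b - a*b) \<ge> 0"
  proof -
    have "a*b \<le> 1" using assms by (metis mult_le_one)
    then show ?thesis using assms by (intro mult_nonneg_nonneg) auto
  qed
  ultimately show ?thesis by linarith
qed

lemma gg_step:
  fixes u t :: real
  assumes "0 \<le> u" "0 \<le> t" "t \<le> 1"
  shows "(1 + t^2) * gg u \<le> gg (u + t)"
proof -
  define k where "k = \<lfloor>u\<rfloor>"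
  define f where "f = u - of_int k"
  have k0: "k \<ge> 0" using assms k_def by simp
  have f0: "0 \<le> f" "f < 1" using f_def k_def by linarith+
  have gu: "gg u = 2 ^ nat k * (1 + f^2)" by (simp add: gg_def k_def f_def)
  show ?thesis
  proof (cases "f + t < 1")
    case True
    have "\<lfloor>u + t\<rfloor> = k" using True f0 assms f_def by (intro floor_unique) auto
    then have gut: "gg (u+t) = 2 ^ nat k * (1 + (f+t)^2)"
      by (simp add: gg_def f_def algebra_simps)
    have "(1 + t^2) * (1 + f^2) \<le> 1 + (f+t)^2"
    proof -
      have "f*t \<le> 1" using f0 assms by (metis less_imp_le mult_le_one)
      then have "t^2*f^2 \<le> 2*f*t" using f0 assms
        by (simp add: power2_eq_square) (metis mult.assoc mult_left_le mult_nonneg_nonneg mult.commute mult_right_mono  order_trans  one_le_numeral mult_right_le_one_le le_numeral_extra(1) mult_left_mono)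
      then show ?thesis by (simp add: algebra_simps power2_eq_square)
    qed
    then have "(1 + t^2) * (1 + f^2) * 2 ^ nat k \<le> (1 + (f+t)^2) * 2 ^ nat k"
      by (intro mult_right_mono) auto
    then show ?thesis using gu gut by (simp add: algebra_simps)
  next
    case False
    have fl: "\<lfloor>u + t\<rfloor> = k + 1" using False f0 assms f_def by (intro floor_unique) auto
    have nk: "nat (k+1) = nat k + 1" using k0 by simp
    have gut: "gg (u+t) = 2 ^ nat k * (2 * (1 + (f + t - 1)^2))"
      unfolding gg_def fl nk by (simp add: f_def algebra_simps)
    have "(1 + t^2) * (1 + f^2) * 2 ^ nat k \<le> (2 * (1 + (f + t - 1)^2)) * 2 ^ nat k"
      using poly_ineq[of f t] f0 assms by (intro mult_right_mono) auto
    then show ?thesis using gu gut by (simp add: algebra_simps)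
  qed
qed

lemma gg_nonneg: "gg u \<ge> 0" by (simp add: gg_def)

lemma upper:
  fixes z :: "nat \<Rightarrow> real"
  shows "(\<forall>i\<in>{1..n}. 0 \<le> z i \<and> z i \<le> 1) \<Longrightarrow> (\<Prod>i=1..n. 1 + (z i)^2) \<le> gg (\<Sum>i=1..n. z i)"
proof (induction n)
  case 0
  then show ?case by (simp add: gg_def)
next
  case (Suc n)
  have IH: "(\<Prod>i=1..n. 1 + (z i)^2) \<le> gg (\<Sum>i=1..n. z i)" using Suc by auto
  have zz: "0 \<le> z (Suc n)" "z (Suc n) \<le> 1" using Suc.prems by auto
  have s0: "0 \<le> (\<Sum>i=1..n. z i)" using Suc.prems by (intro sum_nonneg) auto
  have "(\<Prod>i=1..Suc n. 1 + (z i)^2) = (1 + (z (Suc n))^2) * (\<Prod>i=1..n. 1 + (z i)^2)"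
    by (simp add: prod.cl_ivl_Suc)
  also have "\<dots> \<le> (1 + (z (Suc n))^2) * gg (\<Sum>i=1..n. z i)"
    using IH by (intro mult_left_mono) auto
  also have "\<dots> \<le> gg ((\<Sum>i=1..n. z i) + z (Suc n))"
    using gg_step s0 zz by blast
  also have "\<dots> = gg (\<Sum>i=1..Suc n. z i)" by (simp add: sum.cl_ivl_Suc)
  finally show ?case .
qed

theorem mainTheorem11:
  fixes n :: nat and s :: real
  assumes "n \<ge> 1" and "0 \<le> s" and "s \<le> real n"
  shows "(2 ^ nat \<lfloor>s\<rfloor> * (1 + (s - of_int \<lfloor>s\<rfloor>)^2))
           \<in> {(\<Prod>i=1..n. 1 + (z i)^2) | z :: nat \<Rightarrow> real.
                (\<forall>i\<in>{1..n}. 0 \<le> z i \<and> z i \<le> 1) \<and> (\<Sum>i=1..n. z i) = s}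
       \<and> (\<forall>z :: nat \<Rightarrow> real. (\<forall>i\<in>{1..n}. 0 \<le> z i \<and> z i \<le> 1) \<and> (\<Sum>i=1..n. z i) = s
            \<longrightarrow> (\<Prod>i=1..n. 1 + (z i)^2) \<le> 2 ^ nat \<lfloor>s\<rfloor> * (1 + (s - of_int \<lfloor>s\<rfloor>)^2))"
proof
  define k where "k = nat \<lfloor>s\<rfloor>"
  define f where "f = s - of_int \<lfloor>s\<rfloor>"
  have ks: "real k = of_int \<lfloor>s\<rfloor>" using assms k_def by simp
  have f0: "0 \<le> f" "f < 1" using f_def by linarith+
  have kn: "k \<le> n" using assms ks by (metis floor_of_nat floor_mono k_def nat_int nat_mono)
  define z where "z i = (if i \<le> k then 1 else if i = Suc k then f else 0)" for i
  have zb: "\<forall>i\<in>{1..n}. 0 \<le> z i \<and> z i \<le> 1" using f0 by (auto simp: z_def)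
  show "(2 ^ nat \<lfloor>s\<rfloor> * (1 + (s - of_int \<lfloor>s\<rfloor>)^2))
           \<in> {(\<Prod>i=1..n. 1 + (z i)^2) | z :: nat \<Rightarrow> real.
                (\<forall>i\<in>{1..n}. 0 \<le> z i \<and> z i \<le> 1) \<and> (\<Sum>i=1..n. z i) = s}"
  proof (cases "k = n")
    case True
    have fz: "f = 0" using True ks assms f_def by linarith
    have "(\<Sum>i=1..n. z i) = s" using True ks f_def fz by (simp add: z_def)
    moreover have "(\<Prod>i=1..n. 1 + (z i)^2) = 2 ^ nat \<lfloor>s\<rfloor> * (1 + (s - of_int \<lfloor>s\<rfloor>)^2)"
      using True fz f_def k_def by (simp add: z_def)
    ultimately show ?thesis using zb by force
  next
    case False
    have split: "{1..n} = {1..k} \<union> {Suc k} \<union> {k+2..n}" using False kn by auto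
    have "(\<Sum>i=1..n. z i) = (\<Sum>i=1..k. z i) + z (Suc k) + (\<Sum>i=k+2..n. z i)"
      unfolding split by (subst sum.union_disjoint, auto)+
    also have "\<dots> = s" using ks f_def by (simp add: z_def)
    finally have sz: "(\<Sum>i=1..n. z i) = s" .
    have "(\<Prod>i=1..n. 1 + (z i)^2) = (\<Prod>i=1..k. 1 + (z i)^2) * (1 + (z (Suc k))^2) * (\<Prod>i=k+2..n. 1 + (z i)^2)"
      unfolding split by (subst prod.union_disjoint, auto)+
    also have "\<dots> = 2 ^ nat \<lfloor>s\<rfloor> * (1 + (s - of_int \<lfloor>s\<rfloor>)^2)"
      using k_def f_def by (simp add: z_def)
    finally show ?thesis using zb sz by force
  qed
next
  show "\<forall>z :: nat \<Rightarrow> real. (\<forall>i\<in>{1..n}. 0 \<le> z i \<and> z i \<le> 1) \<and> (\<Sum>i=1..n. z i) = s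
            \<longrightarrow> (\<Prod>i=1..n. 1 + (z i)^2) \<le> 2 ^ nat \<lfloor>s\<rfloor> * (1 + (s - of_int \<lfloor>s\<rfloor>)^2)"
    using upper unfolding gg_def by blast
qed

end
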